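(* Let $1<p\le2$ and $T\in(0,\infty)$. For $M\in\mathbb N$ and $h>0$ let non-negative sequences $\{a_m(h)\}_{m=0}^M$, $\{b_m(h)\}_{m=0}^M$, $\{r_m(h,\kappa)\}_{m=1}^M$, $\{s_m(h,\kappa)\}_{m=1}^M$, $\{\rho_m(h,\kappa)\}_{m=1}^M$, $\{\sigma_m(h,\kappa)\}_{m=1}^M$ be given, where $\kappa=T/M$. Assume there exist $\mu_0,\widehat\kappa>0$ such that for all $0<h<1/\sqrt{\mu_0}$ and $0<\kappa<\widehat\kappa$: $$a_0^2\le\mu_0h^2,\ \ b_0^2\le\mu_0h^2,\ \ \kappa\sum_{m=1}^Mr_m^2\le\mu_0h^2,\ \ \kappa\sum_{m=1}^Ms_m^2\le\mu_0h^2,\ \ \kappa\sum_{m=1}^M\rho_m^2\le\mu_0\kappa^2,\ \ \kappa\sum_{m=1}^M\sigma_m^2\le\mu_0\kappa^2.$$ Further, assume there exist constants $\mu_1,\mu_2,\mu_3>0$, $\Lambda>0$ and $0<\theta\le1$ such that for some $\lambda\in[0,\Lambda]$, for all $0<h<1/\sqrt{\mu_0}$, $0<\kappa<\widehat\kappa$ and $m=1,\dots,M$, both $$d_ta_m^2+\mu_1(\lambda+b_m)^{p-2}b_m^2\le b_mr_m+b_m\rho_m+\mu_2b_{m-1}b_m+s_m^2+\sigma_m^2,$$ $$d_ta_m^2+\mu_1(\lambda+b_m)^{p-2}b_m^2\le b_mr_m+b_m\rho_m+\mu_3b_mb_{m-1}^{1-\theta}a_{m-1}^{\theta}+s_m^2+\sigma_m^2$$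 hold (with the convention $(\lambda+b_m)^{p-2}b_m^2=0$ if $\lambda=b_m=0$). Then there exist constants $\overline{\mu_0},\overline\kappa>0$ and $\mu_4,\mu_5>0$, independent of $\lambda$, such that for all $\kappa,h>0$ with $\kappa<\overline\kappa$ and $h^2<\overline{\mu_0}\,\kappa$: $$\max_{0\le m\le M}b_m\le1,\qquad \max_{0\le m\le M}a_m^2+\mu_1(1+\Lambda)^{p-2}\kappa\sum_{m=0}^Mb_m^2\le\mu_4(h^2+\kappa^2)\exp(2\mu_5\kappa M).$$
   Context: $d_ta_m^2=(a_m^2-a_{m-1}^2)/\kappa$ denotes the backward difference quotient with step $\kappa=T/M$. *)

theory Defs
  imports Complex_Main
begin

definition dt_sq :: "real \<Rightarrow> (nat \<Rightarrow> real) \<Rightarrow> nat \<Rightarrow> real" where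
  "dt_sq \<kappa> a m = ((a m)\<^sup>2 - (a (m - 1))\<^sup>2) / \<kappa>"

end

theory Submission
  imports Defs
begin

lemma young: fixes c x y :: real assumes "0<c" shows "x*y \<le> c*x^2 + y^2/(4*c)"
proof -
  have eq: "c*x^2 + y^2/(4*c) - x*y = (2*c*x - y)^2/(4*c)"
    using assms by (simp add: field_simps power2_eq_square)
  have "0 \<le> (2*c*x - y)^2/(4*c)" using assms by simp
  thus ?thesis using eq by linarith
qed

lemma gm: fixes x y \<theta> :: real assumes "0\<le>x" "0\<le>y" "0\<le>\<theta>" "\<theta>\<le>1"
  shows "x powr (1-\<theta>) * y powr \<theta> \<le> x + y"
proof (cases "x \<le> y")
  case True
  have "x powr (1-\<theta>) * y powr \<theta> \<le> y powr (1-\<theta>) * y powr \<theta>"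
    by (rule mult_right_mono) (use True assms in \<open>auto intro: powr_mono2\<close>)
  also have "\<dots> = y powr 1" by (simp add: powr_add[symmetric])
  also have "\<dots> \<le> x + y" using assms by simp
  finally show ?thesis .
next
  case False
  have "x powr (1-\<theta>) * y powr \<theta> \<le> x powr (1-\<theta>) * x powr \<theta>"
    by (rule mult_left_mono) (use False assms in \<open>auto intro: powr_mono2\<close>)
  also have "\<dots> = x powr 1" by (simp add: powr_add[symmetric])
  also have "\<dots> \<le> x + y" using assms by simp
  finally show ?thesis .
qed

lemma gmw: fixes x y \<theta> \<delta> :: real assumes "0\<le>x" "0\<le>y" "0<\<theta>" "\<theta>\<le>1" "0<\<delta>"
  shows "x powr (1-\<theta>) * y powr \<theta> \<le> \<delta>*x + \<delta> powr ((\<theta>-1)/\<theta>) * y"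
proof -
  let ?L = "\<delta> powr ((\<theta>-1)/\<theta>)"
  have L: "0 < ?L" using assms by simp
  have "(\<delta>*x) powr (1-\<theta>) * (?L*y) powr \<theta> \<le> \<delta>*x + ?L*y"
    using assms L by (intro gm) auto
  also have "(\<delta>*x) powr (1-\<theta>) * (?L*y) powr \<theta> = (\<delta> powr (1-\<theta>) * ?L powr \<theta>) * (x powr (1-\<theta>) * y powr \<theta>)"
    using assms L by (simp add: powr_mult)
  also have "?L powr \<theta> = \<delta> powr (\<theta>-1)" using assms by (simp add: powr_powr)
  also have "\<delta> powr (1-\<theta>) * \<delta> powr (\<theta>-1) = 1" using assms by (simp add: powr_add[symmetric])
  finally show ?thesis by simp
qed

lemma coerc_small: fixes lam \<Lambda> b p :: real
  assumes "0\<le>lam" "lam\<le>\<Lambda>" "0\<le>b" "b\<le>1" "p\<le>2"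
  shows "(1+\<Lambda>) powr (p-2) * b^2 \<le> (lam+b) powr (p-2) * b^2"
proof (cases "b = 0")
  case False
  hence "0 < lam + b" using assms by simp
  hence "(1+\<Lambda>) powr (p-2) \<le> (lam+b) powr (p-2)"
    using assms by (intro powr_mono2') auto
  thus ?thesis by (simp add: mult_right_mono)
qed simp

lemma coerc_big: fixes lam \<Lambda> b p :: real
  assumes "0\<le>lam" "lam\<le>\<Lambda>" "1\<le>b" "p\<le>2" "1<p"
  shows "(1+\<Lambda>) powr (p-2) * b \<le> (lam+b) powr (p-2) * b^2"
proof -
  have "((1+\<Lambda>)*b) powr (p-2) \<le> (lam+b) powr (p-2)"
  proof (intro powr_mono2')
    have "\<Lambda>*1 \<le> \<Lambda>*b" using assms by (intro mult_left_mono) auto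
    thus "lam + b \<le> (1+\<Lambda>)*b" using assms by (simp add: distrib_right)
  next
    show "p - 2 \<le> 0" using assms by simp
  next
    show "0 < lam + b" using assms by simp
  qed
  hence h1: "(1+\<Lambda>) powr (p-2) * b powr (p-2) \<le> (lam+b) powr (p-2)"
    using assms by (subst powr_mult[symmetric]) auto
  have h2: "b powr (p-2) * b^2 = b powr p"
  proof -
    have "b powr 2 = b^2" using powr_realpow[of b 2] assms by simp
    moreover have "b powr (p-2) * b powr 2 = b powr p" using powr_add[of b "p-2" 2] by simp
    ultimately show ?thesis by simp
  qed
  have h3: "b \<le> b powr p" using assms powr_mono[of 1 p b] by (simp del: powr_mono_both')
  have "(1+\<Lambda>) powr (p-2) * b \<le> (1+\<Lambda>) powr (p-2) * (b powr (p-2) * b^2)"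
    using h2 h3 by (intro mult_left_mono) auto
  also have "\<dots> = ((1+\<Lambda>) powr (p-2) * b powr (p-2)) * b^2" by (simp add: mult.assoc)
  also have "\<dots> \<le> (lam+b) powr (p-2) * b^2" using h1 by (intro mult_right_mono) auto
  finally show ?thesis .
qed


lemma core:
  fixes a b r s \<rho> \<sigma> :: "nat \<Rightarrow> real" and \<kappa> c0 \<mu>1 \<mu>3 \<Lambda> lam p \<theta> \<delta> L C E B X \<eta>2 :: real and M :: nat
  assumes \<kappa>pos: "0<\<kappa>" and c0pos: "0<c0" and \<mu>3: "0<\<mu>3" and \<delta>pos: "0<\<delta>"
   and lam: "0\<le>lam" "lam\<le>\<Lambda>" and p: "1<p" "p\<le>2" and \<theta>: "0<\<theta>" "\<theta>\<le>1" and \<mu>1: "0<\<mu>1"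
   and c0: "c0 = \<mu>1*(1+\<Lambda>) powr (p-2)"
   and \<delta>: "\<mu>3*\<delta> = c0/8"
   and L: "L = \<delta> powr ((\<theta>-1)/\<theta>)"
   and C: "C = 2*\<mu>3^2*L^2/c0"
   and \<eta>: "\<forall>y. 0\<le>y \<longrightarrow> y^2 \<le> \<eta>2 \<longrightarrow> \<mu>3 * y powr \<theta> \<le> c0/4"
   and nn: "\<forall>m\<le>M. 0\<le>a m \<and> 0\<le>b m"
   and nn2: "\<forall>m. 1\<le>m \<and> m\<le>M \<longrightarrow> 0\<le>r m \<and> 0\<le>s m \<and> 0\<le>\<rho> m \<and> 0\<le>\<sigma> m"
   and small: "\<forall>m. 1\<le>m \<and> m\<le>M \<longrightarrow> r m \<le> c0/4 \<and> \<rho> m \<le> c0/4 \<and> (s m)^2+(\<sigma> m)^2 \<le> X"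
   and b0: "b 0 \<le> 1"
   and init: "(a 0)^2 + \<kappa>*(c0/16)*(b 0)^2 + \<kappa>*(\<Sum>m=1..M. 2*((r m)^2+(\<rho> m)^2)/c0 + (s m)^2 + (\<sigma> m)^2) \<le> E"
   and expb: "(1+\<kappa>*C)^M * E \<le> B"
   and asmall: "B \<le> \<eta>2"
   and bsmall: "B/\<kappa> + X < c0/4"
   and step: "\<forall>m. 1\<le>m \<and> m\<le>M \<longrightarrow> ((a m)^2 - (a (m-1))^2)/\<kappa> + \<mu>1*(lam + b m) powr (p-2)*(b m)^2
       \<le> b m * r m + b m * \<rho> m + \<mu>3 * b m * b (m-1) powr (1-\<theta>) * a (m-1) powr \<theta> + (s m)^2 + (\<sigma> m)^2"
  shows "(\<forall>m\<le>M. b m \<le> 1) \<and> (\<forall>m\<le>M. (a m)^2 \<le> B) \<and> c0/2*\<kappa>*(\<Sum>m=1..M. (b m)^2) \<le> B"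
proof -
  define g where "g m = 2*((r m)^2+(\<rho> m)^2)/c0 + (s m)^2 + (\<sigma> m)^2" for m
  define \<Phi> where "\<Phi> m = (a m)^2 + \<kappa>*(c0/16)*(b m)^2 + c0/2*\<kappa>*(\<Sum>j=1..m. (b j)^2)" for m
  define G where "G m = \<kappa>*(\<Sum>j=1..m. g j)" for m
  have Cnn: "0 \<le> C" using C c0pos by simp
  have gnn: "0 \<le> g m" for m using c0pos by (simp add: g_def)
  have Gnn: "0 \<le> G m" for m using gnn \<kappa>pos by (simp add: G_def sum_nonneg)
  have GM: "G m \<le> G M" if "m \<le> M" for m
    unfolding G_def using that gnn \<kappa>pos by (intro mult_left_mono sum_mono2) auto
  have \<Phi>0: "\<Phi> 0 = (a 0)^2 + \<kappa>*(c0/16)*(b 0)^2" by (simp add: \<Phi>_def)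
  have E: "\<Phi> 0 + G M \<le> E" using init by (simp add: \<Phi>0 G_def g_def)
  have \<Phi>a: "(a m)^2 \<le> \<Phi> m" for m
  proof -
    have "0 \<le> \<kappa>*(c0/16)*(b m)^2" using \<kappa>pos c0pos by simp
    moreover have "0 \<le> c0/2*\<kappa>*(\<Sum>j=1..m. (b j)^2)" using \<kappa>pos c0pos by (simp add: sum_nonneg)
    ultimately show ?thesis by (simp add: \<Phi>_def)
  qed
  have \<Phi>b: "c0/2*\<kappa>*(\<Sum>j=1..m. (b j)^2) \<le> \<Phi> m" for m
  proof -
    have "0 \<le> \<kappa>*(c0/16)*(b m)^2" using \<kappa>pos c0pos by simp
    thus ?thesis by (simp add: \<Phi>_def)
  qed
  have q1: "1 \<le> 1+\<kappa>*C" using \<kappa>pos Cnn by simp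
  have toB: "\<Phi> m \<le> B" if "m \<le> M" "\<Phi> m \<le> (1+\<kappa>*C)^m * (\<Phi> 0 + G m)" for m
  proof -
    have "(1+\<kappa>*C)^m \<le> (1+\<kappa>*C)^M" using q1 that(1) by (rule power_increasing[rotated])
    moreover have "\<Phi> 0 + G m \<le> E" using GM[OF that(1)] E by simp
    moreover have "0 \<le> \<Phi> 0 + G m" using \<Phi>a[of 0] Gnn[of m] by (smt (verit) zero_le_power2)
    moreover have "0 \<le> (1+\<kappa>*C)^m" using q1 by simp
    ultimately have "(1+\<kappa>*C)^m * (\<Phi> 0 + G m) \<le> (1+\<kappa>*C)^M * E"
      by (meson mult_mono order_trans zero_le_power q1 order_trans[OF zero_le_one])
    thus ?thesis using that(2) expb by simp
  qed
  have main: "m \<le> M \<longrightarrow> (\<forall>j\<le>m. b j \<le> 1) \<and> \<Phi> m \<le> (1+\<kappa>*C)^m * (\<Phi> 0 + G m)" for m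
  proof (induction m)
    case 0
    show ?case using b0 Gnn[of 0] by simp
  next
    case (Suc m)
    show ?case
    proof
      assume sm: "Suc m \<le> M"
      hence mM: "m \<le> M" by simp
      with Suc.IH have IH1: "\<forall>j\<le>m. b j \<le> 1" and IH2: "\<Phi> m \<le> (1+\<kappa>*C)^m * (\<Phi> 0 + G m)" by auto
      have \<Phi>mB: "\<Phi> m \<le> B" using toB[OF mM IH2] .
      have amB: "(a m)^2 \<le> B" using \<Phi>a[of m] \<Phi>mB by simp
      define b' where "b' = b (Suc m)"
      define a' where "a' = a (Suc m)"
      have bm1: "b m \<le> 1" using IH1 by simp
      have bmnn: "0 \<le> b m" and amnn: "0 \<le> a m" using nn mM by auto
      have b'nn: "0 \<le> b'" and a'nn: "0 \<le> a'" using nn sm by (auto simp: b'_def a'_def)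
      have rr: "0 \<le> r (Suc m)" "0 \<le> \<rho> (Suc m)" "0 \<le> s (Suc m)" "0 \<le> \<sigma> (Suc m)" using nn2 sm by auto
      have sm': "r (Suc m) \<le> c0/4" "\<rho> (Suc m) \<le> c0/4" "(s (Suc m))^2+(\<sigma> (Suc m))^2 \<le> X" using small sm by auto
      have st: "(a'^2 - (a m)^2)/\<kappa> + \<mu>1*(lam + b') powr (p-2)*b'^2
         \<le> b' * r (Suc m) + b' * \<rho> (Suc m) + \<mu>3 * b' * b m powr (1-\<theta>) * a m powr \<theta> + (s (Suc m))^2 + (\<sigma> (Suc m))^2"
        using step sm by (auto simp: a'_def b'_def)
      have bpow: "b m powr (1-\<theta>) \<le> 1"
        using powr_mono2[of "1-\<theta>" "b m" 1] \<theta> bmnn bm1 by simp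
      have apow: "\<mu>3 * a m powr \<theta> \<le> c0/4" using \<eta> amnn amB asmall by auto
      have b'1: "b' \<le> 1"
      proof (rule ccontr)
        assume "\<not> b' \<le> 1"
        hence b'g: "1 < b'" by simp
        have cb: "c0 * b' \<le> \<mu>1*(lam + b') powr (p-2)*b'^2"
          using mult_left_mono[OF coerc_big[OF lam(1) lam(2) _ p(2) p(1), of b'], of \<mu>1] b'g \<mu>1
          by (simp add: c0 mult.assoc)
        have t1: "b' * r (Suc m) \<le> b' * (c0/4)" using sm'(1) b'nn by (rule mult_left_mono)
        have t2: "b' * \<rho> (Suc m) \<le> b' * (c0/4)" using sm'(2) b'nn by (rule mult_left_mono)
        have t3: "\<mu>3 * b' * b m powr (1-\<theta>) * a m powr \<theta> \<le> b' * (c0/4)"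
        proof -
          have "\<mu>3 * b' * b m powr (1-\<theta>) * a m powr \<theta> = b' * (b m powr (1-\<theta>) * (\<mu>3 * a m powr \<theta>))"
            by (simp add: algebra_simps)
          also have "\<dots> \<le> b' * (1 * (c0/4))"
            using bpow apow b'nn c0pos \<mu>3
            by (intro mult_left_mono mult_mono) auto
          finally show ?thesis by simp
        qed
        have t4: "- (B/\<kappa>) \<le> (a'^2 - (a m)^2)/\<kappa>"
        proof -
          have "(a m)^2 - B \<le> a'^2" using amB by (smt (verit) zero_le_power2)
          hence "(-B)/\<kappa> \<le> (a'^2 - (a m)^2)/\<kappa>" using \<kappa>pos by (intro divide_right_mono) auto
          thus ?thesis by simp
        qed
        have "c0/4 < c0/4 * b'" using b'g c0pos by simp
        moreover have "b'*(c0/4) = (c0*b')/4" "c0/4 * b' = (c0*b')/4" by simp_all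
        ultimately show False using st cb t1 t2 t3 t4 sm'(3) bsmall by linarith
      qed
      have B1: "\<forall>j\<le>Suc m. b j \<le> 1" using IH1 b'1 by (auto simp: b'_def le_Suc_eq)
      have cs: "c0 * b'^2 \<le> \<mu>1*(lam + b') powr (p-2)*b'^2"
        using mult_left_mono[OF coerc_small[OF lam(1) lam(2) b'nn b'1 p(2)], of \<mu>1] \<mu>1
        by (simp add: c0 mult.assoc)
      have gw: "b m powr (1-\<theta>) * a m powr \<theta> \<le> \<delta> * b m + L * a m"
        using gmw[OF bmnn amnn \<theta> \<delta>pos] L by simp
      have y1: "b' * r (Suc m) \<le> c0/8 * b'^2 + 2*(r (Suc m))^2/c0"
        using young[of "c0/8" b' "r (Suc m)"] c0pos by simp
      have y2: "b' * \<rho> (Suc m) \<le> c0/8 * b'^2 + 2*(\<rho> (Suc m))^2/c0"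
        using young[of "c0/8" b' "\<rho> (Suc m)"] c0pos by simp
      have y3: "b' * (\<mu>3*L*a m) \<le> c0/8 * b'^2 + C*(a m)^2"
        using young[of "c0/8" b' "\<mu>3*L*a m"] c0pos by (simp add: C power_mult_distrib)
      have y4: "b' * b m \<le> (b'^2 + (b m)^2)/2"
      proof -
        have "0 \<le> (b' - b m)^2" by simp
        thus ?thesis by (simp add: power2_eq_square algebra_simps)
      qed
      have t3: "\<mu>3 * b' * b m powr (1-\<theta>) * a m powr \<theta> \<le> c0/8 * (b' * b m) + b' * (\<mu>3*L*a m)"
      proof -
        have "\<mu>3 * b' * b m powr (1-\<theta>) * a m powr \<theta> = (\<mu>3 * b') * (b m powr (1-\<theta>) * a m powr \<theta>)"
          by (simp add: algebra_simps)
        also have "\<dots> \<le> (\<mu>3 * b') * (\<delta> * b m + L * a m)"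
          using gw \<mu>3 b'nn by (intro mult_left_mono) auto
        also have "\<dots> = (\<mu>3*\<delta>) * (b' * b m) + b' * (\<mu>3*L*a m)" by (simp add: algebra_simps)
        finally show ?thesis using \<delta> by simp
      qed
      have "(a'^2 - (a m)^2)/\<kappa> + c0 * b'^2 \<le> 7*c0/16 * b'^2 + c0/16 * (b m)^2 + g (Suc m) + C*(a m)^2"
      proof -
        have "c0/8 * (b' * b m) \<le> c0/8 * ((b'^2 + (b m)^2)/2)" using y4 c0pos by simp
        moreover have "c0/8 * ((b'^2 + (b m)^2)/2) = c0/16*b'^2 + c0/16*(b m)^2" by (simp add: algebra_simps)
        moreover have "7*c0/16 * b'^2 = c0/8 * b'^2 + c0/8 * b'^2 + c0/16*b'^2 + c0/8 * b'^2" by (simp add: algebra_simps)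
        moreover have "2*((r (Suc m))^2+(\<rho> (Suc m))^2)/c0 = 2*(r (Suc m))^2/c0 + 2*(\<rho> (Suc m))^2/c0" by (simp add: add_divide_distrib)
        ultimately show ?thesis using st cs y1 y2 y3 t3 unfolding g_def by linarith
      qed
      hence "\<kappa> * ((a'^2 - (a m)^2)/\<kappa> + c0 * b'^2) \<le> \<kappa> * (7*c0/16 * b'^2 + c0/16 * (b m)^2 + g (Suc m) + C*(a m)^2)"
        using \<kappa>pos by (intro mult_left_mono) auto
      hence "\<kappa> * ((a'^2 - (a m)^2)/\<kappa>) + \<kappa>*(c0 * b'^2) \<le> \<kappa>*(7*c0/16 * b'^2) + \<kappa>*(c0/16 * (b m)^2) + \<kappa>*g (Suc m) + \<kappa>*(C*(a m)^2)"
        by (simp only: distrib_left)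
      moreover have "\<kappa> * ((a'^2 - (a m)^2)/\<kappa>) = a'^2 - (a m)^2" using \<kappa>pos by simp
      ultimately have en: "a'^2 - (a m)^2 + \<kappa>*(c0 * b'^2) \<le> \<kappa>*(7*c0/16 * b'^2) + \<kappa>*(c0/16 * (b m)^2) + \<kappa>*g (Suc m) + \<kappa>*(C*(a m)^2)"
        by linarith
      have \<Phi>S: "\<Phi> (Suc m) = a'^2 + \<kappa>*(c0/16)*b'^2 + c0/2*\<kappa>*(\<Sum>j=1..m. (b j)^2) + c0/2*\<kappa>*b'^2"
        by (simp add: \<Phi>_def a'_def b'_def algebra_simps)
      have \<Phi>m: "\<Phi> m = (a m)^2 + \<kappa>*(c0/16)*(b m)^2 + c0/2*\<kappa>*(\<Sum>j=1..m. (b j)^2)"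
        by (simp add: \<Phi>_def)
      have Gs: "G (Suc m) = G m + \<kappa>*g (Suc m)" by (simp add: G_def algebra_simps)
      have kg: "\<kappa>*g (Suc m) \<le> (1+\<kappa>*C)^(Suc m) * (\<kappa>*g (Suc m))"
      proof -
        have "1*(\<kappa>*g (Suc m)) \<le> (1+\<kappa>*C)^(Suc m) * (\<kappa>*g (Suc m))"
          using mult_right_mono[OF one_le_power[OF q1, of "Suc m"], of "\<kappa>*g (Suc m)"] gnn[of "Suc m"] \<kappa>pos by simp
        thus ?thesis by simp
      qed
      have eqf: "(1+\<kappa>*C) * ((1+\<kappa>*C)^m * (\<Phi> 0 + G m)) + (1+\<kappa>*C)^(Suc m) * (\<kappa>*g (Suc m)) = (1+\<kappa>*C)^(Suc m) * (\<Phi> 0 + G (Suc m))"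
        unfolding Gs by (simp add: algebra_simps)
      have s1: "\<Phi> (Suc m) \<le> \<Phi> m + \<kappa>*g (Suc m) + \<kappa>*(C*(a m)^2)"
      proof -
        have e1: "\<kappa>*(c0/16)*b'^2 = (\<kappa>*c0*b'^2)/16" "c0/2*\<kappa>*b'^2 = (\<kappa>*c0*b'^2)/2"
          "\<kappa>*(7*c0/16*b'^2) = 7*(\<kappa>*c0*b'^2)/16" "\<kappa>*(c0*b'^2) = \<kappa>*c0*b'^2"
          "\<kappa>*(c0/16*(b m)^2) = \<kappa>*(c0/16)*(b m)^2" by simp_all
        show ?thesis using en e1 unfolding \<Phi>S \<Phi>m by linarith
      qed
      have s2: "\<kappa>*(C*(a m)^2) \<le> \<kappa>*(C*\<Phi> m)"
        using \<Phi>a[of m] \<kappa>pos Cnn by (intro mult_left_mono) auto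
      have s3: "(1+\<kappa>*C) * \<Phi> m \<le> (1+\<kappa>*C) * ((1+\<kappa>*C)^m * (\<Phi> 0 + G m))"
        using IH2 q1 by (intro mult_left_mono) auto
      have s4: "(1+\<kappa>*C) * \<Phi> m = \<Phi> m + \<kappa>*(C*\<Phi> m)" by (simp add: algebra_simps)
      have "\<Phi> (Suc m) \<le> (1+\<kappa>*C)^(Suc m) * (\<Phi> 0 + G (Suc m))"
        using s1 s2 s3 s4 kg eqf by linarith
      thus "(\<forall>j\<le>Suc m. b j \<le> 1) \<and> \<Phi> (Suc m) \<le> (1+\<kappa>*C)^(Suc m) * (\<Phi> 0 + G (Suc m))"
        using B1 by simp
    qed
  qed
  have PB: "\<Phi> m \<le> B" if "m \<le> M" for m using main[of m] that toB by blast
  have "\<forall>m\<le>M. b m \<le> 1" using main[of M] by simp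
  moreover have "\<forall>m\<le>M. (a m)^2 \<le> B" using PB \<Phi>a order_trans by blast
  moreover have "c0/2*\<kappa>*(\<Sum>m=1..M. (b m)^2) \<le> B" using PB[of M] \<Phi>b[of M] by simp
  ultimately show ?thesis by blast
qed

theorem lemma2p4:
  fixes p T \<mu>0 \<kappa>hat \<mu>1 \<mu>2 \<mu>3 \<Lambda> \<theta> :: real
  assumes "1 < p" "p \<le> 2" "0 < T"
    and "0 < \<mu>0" "0 < \<kappa>hat"
    and "0 < \<mu>1" "0 < \<mu>2" "0 < \<mu>3" "0 < \<Lambda>" "0 < \<theta>" "\<theta> \<le> 1"
  shows "\<exists>\<mu>0bar \<kappa>bar \<mu>4 \<mu>5. 0 < \<mu>0bar \<and> 0 < \<kappa>bar \<and> 0 < \<mu>4 \<and> 0 < \<mu>5 \<and>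
    (\<forall>(lam::real) (a::real \<Rightarrow> nat \<Rightarrow> nat \<Rightarrow> real) (b::real \<Rightarrow> nat \<Rightarrow> nat \<Rightarrow> real)
        (r::real \<Rightarrow> nat \<Rightarrow> nat \<Rightarrow> real) (s::real \<Rightarrow> nat \<Rightarrow> nat \<Rightarrow> real)
        (\<rho>::real \<Rightarrow> nat \<Rightarrow> nat \<Rightarrow> real) (\<sigma>::real \<Rightarrow> nat \<Rightarrow> nat \<Rightarrow> real).
      0 \<le> lam \<and> lam \<le> \<Lambda>
      \<and> (\<forall>h M m. m \<le> M \<longrightarrow> 0 \<le> a h M m \<and> 0 \<le> b h M m)
      \<and> (\<forall>h M m. 1 \<le> m \<and> m \<le> M \<longrightarrow>
            0 \<le> r h M m \<and> 0 \<le> s h M m \<and> 0 \<le> \<rho> h M m \<and> 0 \<le> \<sigma> h M m)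
      \<and> (\<forall>h (M::nat). 0 < h \<and> h < 1 / sqrt \<mu>0 \<and> 1 \<le> M \<and> T / real M < \<kappa>hat \<longrightarrow>
            (a h M 0)\<^sup>2 \<le> \<mu>0 * h\<^sup>2 \<and> (b h M 0)\<^sup>2 \<le> \<mu>0 * h\<^sup>2
          \<and> (T / real M) * (\<Sum>m=1..M. (r h M m)\<^sup>2) \<le> \<mu>0 * h\<^sup>2
          \<and> (T / real M) * (\<Sum>m=1..M. (s h M m)\<^sup>2) \<le> \<mu>0 * h\<^sup>2
          \<and> (T / real M) * (\<Sum>m=1..M. (\<rho> h M m)\<^sup>2) \<le> \<mu>0 * (T / real M)\<^sup>2
          \<and> (T / real M) * (\<Sum>m=1..M. (\<sigma> h M m)\<^sup>2) \<le> \<mu>0 * (T / real M)\<^sup>2)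
      \<and> (\<forall>h (M::nat) m. 0 < h \<and> h < 1 / sqrt \<mu>0 \<and> 1 \<le> M \<and> T / real M < \<kappa>hat
            \<and> 1 \<le> m \<and> m \<le> M \<longrightarrow>
            dt_sq (T / real M) (a h M) m
              + \<mu>1 * (lam + b h M m) powr (p - 2) * (b h M m)\<^sup>2
            \<le> b h M m * r h M m + b h M m * \<rho> h M m + \<mu>2 * b h M (m - 1) * b h M m
              + (s h M m)\<^sup>2 + (\<sigma> h M m)\<^sup>2
          \<and> dt_sq (T / real M) (a h M) m
              + \<mu>1 * (lam + b h M m) powr (p - 2) * (b h M m)\<^sup>2
            \<le> b h M m * r h M m + b h M m * \<rho> h M m
              + \<mu>3 * b h M m * b h M (m - 1) powr (1 - \<theta>) * a h M (m - 1) powr \<theta>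
              + (s h M m)\<^sup>2 + (\<sigma> h M m)\<^sup>2)
      \<longrightarrow>
      (\<forall>h (M::nat). 0 < h \<and> 1 \<le> M \<and> T / real M < \<kappa>bar \<and> h\<^sup>2 < \<mu>0bar * (T / real M) \<longrightarrow>
          (\<forall>m \<le> M. b h M m \<le> 1)
        \<and> (MAX m\<in>{0..M}. (a h M m)\<^sup>2)
            + \<mu>1 * (1 + \<Lambda>) powr (p - 2) * (T / real M) * (\<Sum>m=0..M. (b h M m)\<^sup>2)
          \<le> \<mu>4 * (h\<^sup>2 + (T / real M)\<^sup>2) * exp (2 * \<mu>5 * (T / real M) * real M)))"
proof -
  define c0 where "c0 = \<mu>1*(1+\<Lambda>) powr (p-2)"
  define \<delta> where "\<delta> = c0/(8*\<mu>3)"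
  define L where "L = \<delta> powr ((\<theta>-1)/\<theta>)"
  define C where "C = 2*\<mu>3^2*L^2/c0"
  define \<eta> where "\<eta> = (c0/(4*\<mu>3)) powr (1/\<theta>)"
  define \<eta>2 where "\<eta>2 = \<eta>^2"
  define A where "A = \<mu>0*(1+c0/16) + \<mu>0*(1+2/c0)"
  define B0 where "B0 = exp(C*T)*A"
  define t where "t = min 1 (min \<kappa>hat (min (1/\<mu>0) (min ((c0/4)^2/\<mu>0) (min (c0/(16*(B0+\<mu>0))) (\<eta>2/(2*B0+1))))))"
  define \<mu>4 where "\<mu>4 = 3*A + c0*\<mu>0"
  have c0pos: "0 < c0" unfolding c0_def using assms by simp
  have \<delta>pos: "0 < \<delta>" unfolding \<delta>_def using c0pos assms by simp
  have Lpos: "0 < L" unfolding L_def using \<delta>pos by simp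
  have Cpos: "0 < C" unfolding C_def using Lpos c0pos assms by simp
  have \<eta>pos: "0 < \<eta>" unfolding \<eta>_def using c0pos assms by simp
  have \<eta>2pos: "0 < \<eta>2" unfolding \<eta>2_def using \<eta>pos by simp
  have Apos: "0 < A" unfolding A_def using c0pos assms by (simp add: add_pos_pos)
  have B0pos: "0 < B0" unfolding B0_def using Apos by simp
  have tpos: "0 < t" unfolding t_def using assms c0pos B0pos \<eta>2pos by simp
  have t1: "t \<le> 1" "t \<le> \<kappa>hat" "t \<le> 1/\<mu>0" "t \<le> (c0/4)^2/\<mu>0" "t \<le> c0/(16*(B0+\<mu>0))" "t \<le> \<eta>2/(2*B0+1)"
    unfolding t_def by (simp_all add: min_le_iff_disj)
  have \<mu>4pos: "0 < \<mu>4" unfolding \<mu>4_def using Apos c0pos assms(4) by (intro add_pos_pos) auto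
  have \<eta>prop: "\<forall>y. 0\<le>y \<longrightarrow> y^2 \<le> \<eta>2 \<longrightarrow> \<mu>3 * y powr \<theta> \<le> c0/4"
  proof (intro allI impI)
    fix y :: real assume y: "0 \<le> y" "y^2 \<le> \<eta>2"
    have "y^2 \<le> \<eta>^2" using y(2) unfolding \<eta>2_def .
    hence ye: "y \<le> \<eta>" using power2_le_imp_le \<eta>pos less_imp_le by blast
    have th0: "0 \<le> \<theta>" using assms(10) by simp
    have "y powr \<theta> \<le> \<eta> powr \<theta>" by (rule powr_mono2[OF th0 y(1) ye])
    also have "\<eta> powr \<theta> = (c0/(4*\<mu>3)) powr (1/\<theta>*\<theta>)" unfolding \<eta>_def by (rule powr_powr)
    also have "1/\<theta>*\<theta> = 1" using assms(10) by simp
    also have "(c0/(4*\<mu>3)) powr 1 = c0/(4*\<mu>3)" using c0pos assms(8) by simp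
    finally have "\<mu>3 * y powr \<theta> \<le> \<mu>3 * (c0/(4*\<mu>3))" using assms(8) by (intro mult_left_mono) auto
    also have "\<mu>3 * (c0/(4*\<mu>3)) = c0/4" using assms(8) by simp
    finally show "\<mu>3 * y powr \<theta> \<le> c0/4" .
  qed
  show ?thesis
    apply (rule exI[of _ t], rule exI[of _ t], rule exI[of _ \<mu>4], rule exI[of _ "C/2"])
    apply (intro conjI)
        apply (rule tpos)
       apply (rule tpos)
      apply (rule \<mu>4pos)
     using Cpos apply simp
    apply (intro allI impI)
    subgoal premises prems for lam a b r s \<rho> \<sigma> h M
    proof -
      have lam: "0 \<le> lam" "lam \<le> \<Lambda>" using prems(1) by blast+
      have nn: "\<forall>m\<le>M. 0 \<le> a h M m \<and> 0 \<le> b h M m" using prems(1) by blast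
      have nn2: "\<forall>m. 1 \<le> m \<and> m \<le> M \<longrightarrow> 0 \<le> r h M m \<and> 0 \<le> s h M m \<and> 0 \<le> \<rho> h M m \<and> 0 \<le> \<sigma> h M m"
        using prems(1) by blast
      have HI: "\<forall>h (M::nat). 0 < h \<and> h < 1 / sqrt \<mu>0 \<and> 1 \<le> M \<and> T / real M < \<kappa>hat \<longrightarrow>
            (a h M 0)\<^sup>2 \<le> \<mu>0 * h\<^sup>2 \<and> (b h M 0)\<^sup>2 \<le> \<mu>0 * h\<^sup>2
          \<and> (T / real M) * (\<Sum>m=1..M. (r h M m)\<^sup>2) \<le> \<mu>0 * h\<^sup>2
          \<and> (T / real M) * (\<Sum>m=1..M. (s h M m)\<^sup>2) \<le> \<mu>0 * h\<^sup>2
          \<and> (T / real M) * (\<Sum>m=1..M. (\<rho> h M m)\<^sup>2) \<le> \<mu>0 * (T / real M)\<^sup>2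
          \<and> (T / real M) * (\<Sum>m=1..M. (\<sigma> h M m)\<^sup>2) \<le> \<mu>0 * (T / real M)\<^sup>2"
        using prems(1) by blast
      have HS: "\<forall>h (M::nat) m. 0 < h \<and> h < 1 / sqrt \<mu>0 \<and> 1 \<le> M \<and> T / real M < \<kappa>hat
            \<and> 1 \<le> m \<and> m \<le> M \<longrightarrow>
            dt_sq (T / real M) (a h M) m
              + \<mu>1 * (lam + b h M m) powr (p - 2) * (b h M m)\<^sup>2
            \<le> b h M m * r h M m + b h M m * \<rho> h M m
              + \<mu>3 * b h M m * b h M (m - 1) powr (1 - \<theta>) * a h M (m - 1) powr \<theta>
              + (s h M m)\<^sup>2 + (\<sigma> h M m)\<^sup>2"
        using prems(1) by blast
      define \<kappa> where "\<kappa> = T / real M"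
      have hpos: "0 < h" and M1: "1 \<le> M" and \<kappa>t: "\<kappa> < t" and ht: "h^2 < t*\<kappa>"
        using prems(2) by (auto simp: \<kappa>_def)
      have \<kappa>pos: "0 < \<kappa>" unfolding \<kappa>_def using M1 assms by simp
      have \<kappa>M: "\<kappa> * real M = T" unfolding \<kappa>_def using M1 by simp
      have \<kappa>1: "\<kappa> \<le> 1" using \<kappa>t t1 by simp
      have tt: "t*t \<le> t" using t1 tpos by (simp add: mult_left_le)
      have "t*\<kappa> \<le> t*t" using \<kappa>t tpos by simp
      hence h2: "h^2 < 1/\<mu>0" using ht tt t1 by linarith
      have hsq: "h < 1/sqrt \<mu>0"
      proof -
        have "sqrt (h^2) < sqrt (1/\<mu>0)" using h2 by (rule real_sqrt_less_mono)
        thus ?thesis using hpos by (simp add: real_sqrt_divide)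
      qed
      have hk: "\<kappa> < \<kappa>hat" using \<kappa>t t1 by simp
      have HI': "(a h M 0)\<^sup>2 \<le> \<mu>0 * h\<^sup>2 \<and> (b h M 0)\<^sup>2 \<le> \<mu>0 * h\<^sup>2
          \<and> \<kappa> * (\<Sum>m=1..M. (r h M m)\<^sup>2) \<le> \<mu>0 * h\<^sup>2
          \<and> \<kappa> * (\<Sum>m=1..M. (s h M m)\<^sup>2) \<le> \<mu>0 * h\<^sup>2
          \<and> \<kappa> * (\<Sum>m=1..M. (\<rho> h M m)\<^sup>2) \<le> \<mu>0 * \<kappa>\<^sup>2
          \<and> \<kappa> * (\<Sum>m=1..M. (\<sigma> h M m)\<^sup>2) \<le> \<mu>0 * \<kappa>\<^sup>2"
        using HI hpos hsq M1 hk unfolding \<kappa>_def by blast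
      hence a0: "(a h M 0)\<^sup>2 \<le> \<mu>0 * h\<^sup>2" and b0: "(b h M 0)\<^sup>2 \<le> \<mu>0 * h\<^sup>2"
        and sr: "\<kappa> * (\<Sum>m=1..M. (r h M m)\<^sup>2) \<le> \<mu>0 * h\<^sup>2"
        and ss: "\<kappa> * (\<Sum>m=1..M. (s h M m)\<^sup>2) \<le> \<mu>0 * h\<^sup>2"
        and s\<rho>: "\<kappa> * (\<Sum>m=1..M. (\<rho> h M m)\<^sup>2) \<le> \<mu>0 * \<kappa>\<^sup>2"
        and s\<sigma>: "\<kappa> * (\<Sum>m=1..M. (\<sigma> h M m)\<^sup>2) \<le> \<mu>0 * \<kappa>\<^sup>2" by blast+
      define \<epsilon> where "\<epsilon> = h^2 + \<kappa>^2"
      define X where "X = \<mu>0*(h^2/\<kappa> + \<kappa>)"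
      have \<epsilon>nn: "0 \<le> \<epsilon>" unfolding \<epsilon>_def by simp
      have hk2: "h^2/\<kappa> < t" using ht \<kappa>pos by (simp add: divide_less_eq mult.commute)
      have single: "\<kappa> * (f m)^2 \<le> c" if "\<kappa> * (\<Sum>m=1..M. (f m)^2) \<le> c" "1 \<le> m" "m \<le> M" for f :: "nat \<Rightarrow> real" and c m
      proof -
        have "(f m)^2 \<le> (\<Sum>m=1..M. (f m)^2)" using that by (intro member_le_sum) auto
        hence "\<kappa> * (f m)^2 \<le> \<kappa> * (\<Sum>m=1..M. (f m)^2)" using \<kappa>pos by simp
        thus ?thesis using that(1) by simp
      qed
      have small: "\<forall>m. 1\<le>m \<and> m\<le>M \<longrightarrow> r h M m \<le> c0/4 \<and> \<rho> h M m \<le> c0/4 \<and> (s h M m)^2+(\<sigma> h M m)^2 \<le> X"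
      proof (intro allI impI)
        fix m assume m: "1 \<le> m \<and> m \<le> M"
        have c4: "\<mu>0 * t \<le> (c0/4)^2" using t1(4) assms by (simp add: field_simps)
        have "\<kappa> * (r h M m)^2 \<le> \<mu>0 * h^2" using single[OF sr] m by auto
        hence "(r h M m)^2 \<le> \<mu>0 * (h^2/\<kappa>)" using \<kappa>pos by (simp add: field_simps)
        also have "\<dots> \<le> \<mu>0 * t" using mult_left_mono[OF less_imp_le[OF hk2], of \<mu>0] assms(4) by simp
        finally have "(r h M m)^2 \<le> (c0/4)^2" using c4 by simp
        hence R: "r h M m \<le> c0/4" using c0pos power2_le_imp_le[of _ "c0/4"] by simp
        have "\<kappa> * (\<rho> h M m)^2 \<le> \<mu>0 * \<kappa>^2" using single[OF s\<rho>] m by auto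
        hence "(\<rho> h M m)^2 \<le> \<mu>0 * \<kappa>" using \<kappa>pos by (simp add: power2_eq_square)
        also have "\<dots> \<le> \<mu>0 * t" using \<kappa>t assms by simp
        finally have "(\<rho> h M m)^2 \<le> (c0/4)^2" using c4 by simp
        hence P: "\<rho> h M m \<le> c0/4" using c0pos power2_le_imp_le[of _ "c0/4"] by simp
        have "\<kappa> * (s h M m)^2 \<le> \<mu>0 * h^2" using single[OF ss] m by auto
        hence S1: "(s h M m)^2 \<le> \<mu>0 * (h^2/\<kappa>)" using \<kappa>pos by (simp add: field_simps)
        have "\<kappa> * (\<sigma> h M m)^2 \<le> \<mu>0 * \<kappa>^2" using single[OF s\<sigma>] m by auto
        hence S2: "(\<sigma> h M m)^2 \<le> \<mu>0 * \<kappa>" using \<kappa>pos by (simp add: power2_eq_square)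
        show "r h M m \<le> c0/4 \<and> \<rho> h M m \<le> c0/4 \<and> (s h M m)^2+(\<sigma> h M m)^2 \<le> X"
          using R P S1 S2 unfolding X_def by (simp add: distrib_left)
      qed
      have b01: "b h M 0 \<le> 1"
      proof -
        have "\<mu>0 * h^2 < \<mu>0 * (1/\<mu>0)" using mult_strict_left_mono[OF h2 assms(4)] by simp
        hence "(b h M 0)^2 \<le> 1^2" using b0 assms by simp
        thus ?thesis using power2_le_imp_le[of _ 1] by simp
      qed
      have init: "(a h M 0)^2 + \<kappa>*(c0/16)*(b h M 0)^2 + \<kappa>*(\<Sum>m=1..M. 2*((r h M m)^2+(\<rho> h M m)^2)/c0 + (s h M m)^2 + (\<sigma> h M m)^2) \<le> A*\<epsilon>"
      proof -
        have "(\<Sum>m=1..M. 2*((r h M m)^2+(\<rho> h M m)^2)/c0 + (s h M m)^2 + (\<sigma> h M m)^2)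
          = 2/c0*(\<Sum>m=1..M. (r h M m)^2) + 2/c0*(\<Sum>m=1..M. (\<rho> h M m)^2) + (\<Sum>m=1..M. (s h M m)^2) + (\<Sum>m=1..M. (\<sigma> h M m)^2)"
          by (simp add: sum.distrib sum_distrib_left algebra_simps add_divide_distrib)
        hence e: "\<kappa>*(\<Sum>m=1..M. 2*((r h M m)^2+(\<rho> h M m)^2)/c0 + (s h M m)^2 + (\<sigma> h M m)^2)
          = 2/c0*(\<kappa>*(\<Sum>m=1..M. (r h M m)^2)) + 2/c0*(\<kappa>*(\<Sum>m=1..M. (\<rho> h M m)^2)) + \<kappa>*(\<Sum>m=1..M. (s h M m)^2) + \<kappa>*(\<Sum>m=1..M. (\<sigma> h M m)^2)"
          by (simp add: algebra_simps)
        have c2: "0 < 2/c0" using c0pos by simp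
        have i1: "2/c0*(\<kappa>*(\<Sum>m=1..M. (r h M m)^2)) \<le> 2/c0*(\<mu>0*h^2)" using sr c2 by (intro mult_left_mono) auto
        have i2: "2/c0*(\<kappa>*(\<Sum>m=1..M. (\<rho> h M m)^2)) \<le> 2/c0*(\<mu>0*\<kappa>^2)" using s\<rho> c2 by (intro mult_left_mono) auto
        have i3: "\<kappa>*(c0/16)*(b h M 0)^2 \<le> 1*(c0/16)*(\<mu>0*h^2)"
          using \<kappa>1 b0 c0pos \<kappa>pos by (intro mult_mono) auto
        have "A*\<epsilon> = \<mu>0*h^2 + (c0/16)*(\<mu>0*h^2) + \<mu>0*\<kappa>^2 + (c0/16)*(\<mu>0*\<kappa>^2)
           + 2/c0*(\<mu>0*h^2) + 2/c0*(\<mu>0*\<kappa>^2) + \<mu>0*h^2 + \<mu>0*\<kappa>^2"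
          unfolding A_def \<epsilon>_def by (simp add: algebra_simps)
        moreover have "0 \<le> (c0/16)*(\<mu>0*\<kappa>^2) + \<mu>0*\<kappa>^2" using c0pos assms by simp
        ultimately show ?thesis using e i1 i2 i3 a0 ss s\<sigma> by linarith
      qed
      have expb: "(1+\<kappa>*C)^M * (A*\<epsilon>) \<le> B0*\<epsilon>"
      proof -
        have "(1+\<kappa>*C)^M \<le> exp(\<kappa>*C)^M" using \<kappa>pos Cpos by (intro power_mono) auto
        also have "\<dots> = exp(C*T)" using \<kappa>M by (simp add: exp_of_nat_mult[symmetric] algebra_simps)
        finally show ?thesis unfolding B0_def using Apos \<epsilon>nn
          by (simp add: mult_right_mono mult.assoc[symmetric])
      qed
      have \<epsilon>t: "\<epsilon> \<le> 2*t"
      proof -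
        have "\<kappa>^2 \<le> t*t" using \<kappa>t \<kappa>pos by (simp add: power2_eq_square mult_mono less_imp_le)
        thus ?thesis unfolding \<epsilon>_def using ht \<open>t*\<kappa> \<le> t*t\<close> tt by linarith
      qed
      have asmall: "B0*\<epsilon> \<le> \<eta>2"
      proof -
        have "B0*\<epsilon> \<le> B0*(2*t)" using \<epsilon>t B0pos by simp
        also have "\<dots> \<le> (2*B0+1)*t" using tpos by (simp add: algebra_simps)
        also have "\<dots> \<le> \<eta>2" using t1(6) B0pos by (simp add: field_simps)
        finally show ?thesis .
      qed
      have bsmall: "B0*\<epsilon>/\<kappa> + X < c0/4"
      proof -
        have "B0*\<epsilon>/\<kappa> + X = (B0+\<mu>0)*(h^2/\<kappa> + \<kappa>)"
          unfolding \<epsilon>_def X_def using \<kappa>pos by (simp add: field_simps power2_eq_square)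
        also have "\<dots> < (B0+\<mu>0)*(2*t)" using hk2 \<kappa>t B0pos assms by (intro mult_strict_left_mono) auto
        also have "\<dots> \<le> 2*(c0/16)" using t1(5) B0pos assms by (simp add: field_simps)
        finally show ?thesis using c0pos by linarith
      qed
      have step: "\<forall>m. 1\<le>m \<and> m\<le>M \<longrightarrow> ((a h M m)^2 - (a h M (m-1))^2)/\<kappa> + \<mu>1*(lam + b h M m) powr (p-2)*(b h M m)^2
       \<le> b h M m * r h M m + b h M m * \<rho> h M m + \<mu>3 * b h M m * b h M (m-1) powr (1-\<theta>) * a h M (m-1) powr \<theta> + (s h M m)^2 + (\<sigma> h M m)^2"
        using HS hpos hsq M1 hk unfolding \<kappa>_def dt_sq_def by blast
      have res: "(\<forall>m\<le>M. b h M m \<le> 1) \<and> (\<forall>m\<le>M. (a h M m)^2 \<le> B0*\<epsilon>) \<and> c0/2*\<kappa>*(\<Sum>m=1..M. (b h M m)^2) \<le> B0*\<epsilon>"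
        by (rule core[OF \<kappa>pos c0pos assms(8) \<delta>pos lam assms(1,2,10,11,6) c0_def _ L_def C_def \<eta>prop nn nn2 small b01 init expb asmall bsmall step])
           (use assms in \<open>simp add: \<delta>_def\<close>)
      have R1: "\<forall>m\<le>M. b h M m \<le> 1" using res by blast
      have R2: "(MAX m\<in>{0..M}. (a h M m)\<^sup>2) \<le> B0*\<epsilon>" using res by simp
      have R3: "c0*\<kappa>*(\<Sum>m=0..M. (b h M m)\<^sup>2) \<le> 2*(B0*\<epsilon>) + c0*\<mu>0*\<epsilon>"
      proof -
        have "(\<Sum>m=0..M. (b h M m)\<^sup>2) = (b h M 0)^2 + (\<Sum>m=1..M. (b h M m)\<^sup>2)"
          by (simp add: sum.atLeast_Suc_atMost)
        hence "c0*\<kappa>*(\<Sum>m=0..M. (b h M m)\<^sup>2) = c0*\<kappa>*(b h M 0)^2 + 2*(c0/2*\<kappa>*(\<Sum>m=1..M. (b h M m)\<^sup>2))"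
          by (simp add: algebra_simps)
        moreover have "c0*\<kappa>*(b h M 0)^2 \<le> c0*1*(\<mu>0*\<epsilon>)"
        proof -
          have "0 \<le> \<mu>0*\<kappa>^2" using assms(4) by simp
          hence "(b h M 0)^2 \<le> \<mu>0*\<epsilon>" using b0 unfolding \<epsilon>_def by (simp add: distrib_left)
          thus ?thesis using c0pos \<kappa>1 \<kappa>pos by (intro mult_mono) auto
        qed
        ultimately show ?thesis using res by simp
      qed
      have fin: "(MAX m\<in>{0..M}. (a h M m)\<^sup>2) + \<mu>1 * (1 + \<Lambda>) powr (p - 2) * (T / real M) * (\<Sum>m=0..M. (b h M m)\<^sup>2)
          \<le> \<mu>4 * (h\<^sup>2 + (T / real M)\<^sup>2) * exp (2 * (C/2) * (T / real M) * real M)"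
      proof -
        have ex: "exp (2 * (C/2) * (T / real M) * real M) = exp (C*T)"
          using \<kappa>M M1 unfolding \<kappa>_def by (simp add: mult.assoc)
        have "3*(B0*\<epsilon>) + c0*\<mu>0*\<epsilon> \<le> \<mu>4 * \<epsilon> * exp(C*T)"
        proof -
          have "c0*\<mu>0*\<epsilon> \<le> c0*\<mu>0*\<epsilon>*exp(C*T)"
          proof -
            have e1: "1 \<le> exp(C*T)" using Cpos assms(3) by simp
            have x0: "0 \<le> c0*\<mu>0*\<epsilon>" using c0pos assms(4) \<epsilon>nn by simp
            show ?thesis using mult_left_mono[OF e1 x0] by simp
          qed
          thus ?thesis unfolding \<mu>4_def B0_def by (simp add: algebra_simps)
        qed
        hence m: "(MAX m\<in>{0..M}. (a h M m)\<^sup>2) + c0*\<kappa>*(\<Sum>m=0..M. (b h M m)\<^sup>2) \<le> \<mu>4 * \<epsilon> * exp(C*T)"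
          using R2 R3 by linarith
        have e1: "\<mu>1 * (1 + \<Lambda>) powr (p - 2) * (T / real M) = c0*\<kappa>" by (simp add: c0_def \<kappa>_def)
        have e2: "h\<^sup>2 + (T / real M)\<^sup>2 = \<epsilon>" by (simp add: \<epsilon>_def \<kappa>_def)
        show ?thesis unfolding e1 e2 ex using m .
      qed
      show ?thesis using R1 fin by simp
    qed
    done
qed

end
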